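(* Let $A:\mathbb{R}^n\to\mathbb{R}^n$ be a linear operator all of whose eigenvalues are (real and) nonnegative. Then $A$ is GTP with respect to some totally positive structure. Moreover, if all eigenvalues of $A$ are positive and simple, then $A$ is GSTP with respect to some totally positive structure.
   Context: A proper cone is a closed convex cone that is pointed and solid. $\wedge^j\mathbb{R}^n$ is the $j$th exterior power and $\wedge^jA$ the operator with $(\wedge^jA)(x_1\wedge\cdots\wedge x_j)=Ax_1\wedge\cdots\wedge Ax_j$. $B$ is $K$-nonnegative if $BK\subseteq K$ and $K$-positive if $B(K\setminus\{0\})\subseteq\operatorname{int}K$. A totally positive structure is a family $\{K_1,\ldots,K_n\}$, $K_j\subset\wedge^j\mathbb{R}^n$ a proper cone; $A$ is GTP (GSTP) with respect to it if $\wedge^jA$ is $K_j$-nonnegative ($K_j$-positive) for all $j=1,\ldots,n$. *)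

theory Defs
  imports "HOL-Analysis.Analysis" "Jordan_Normal_Form.Jordan_Normal_Form" "Jordan_Normal_Form.DL_Submatrix"
begin

text \<open>The j-th exterior power of R^n is modelled in Pluecker coordinates: functions
  f :: nat set => real supported on the j-element subsets of {0..<n}.\<close>

definition ext_space :: "nat \<Rightarrow> nat \<Rightarrow> (nat set \<Rightarrow> real) set" where
  "ext_space n j = {f. \<forall>S. f S \<noteq> 0 \<longrightarrow> S \<subseteq> {0..<n} \<and> card S = j}"

definition jsubsets :: "nat \<Rightarrow> nat \<Rightarrow> nat set set" where
  "jsubsets n j = {S. S \<subseteq> {0..<n} \<and> card S = j}"

text \<open>The j-th compound matrix of A acting on the j-th exterior power:
  its (S,T) entry is the minor of A with rows S and columns T (both in increasing order).\<close>
definition ext_pow :: "nat \<Rightarrow> real mat \<Rightarrow> (nat set \<Rightarrow> real) \<Rightarrow> (nat set \<Rightarrow> real)" where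
  "ext_pow j A f = (\<lambda>S. if S \<in> jsubsets (dim_row A) j
      then (\<Sum>T\<in>jsubsets (dim_row A) j. det (submatrix A S T) * f T) else 0)"

definition proper_cone_in :: "(nat set \<Rightarrow> real) set \<Rightarrow> (nat set \<Rightarrow> real) set \<Rightarrow> bool" where
  "proper_cone_in V K \<longleftrightarrow>
     K \<subseteq> V \<and> K \<noteq> {} \<and>
     (\<forall>x\<in>K. \<forall>y\<in>K. (\<lambda>S. x S + y S) \<in> K) \<and>
     (\<forall>x\<in>K. \<forall>c::real. c \<ge> 0 \<longrightarrow> (\<lambda>S. c * x S) \<in> K) \<and>
     closed K \<and>
     (\<forall>x\<in>K. (\<lambda>S. - x S) \<in> K \<longrightarrow> x = (\<lambda>S. 0)) \<and>
     ((top_of_set V) interior_of K \<noteq> {})"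

definition TP_structure :: "nat \<Rightarrow> (nat \<Rightarrow> (nat set \<Rightarrow> real) set) \<Rightarrow> bool" where
  "TP_structure n K \<longleftrightarrow> (\<forall>j\<in>{1..n}. proper_cone_in (ext_space n j) (K j))"

definition K_nonneg :: "((nat set \<Rightarrow> real) \<Rightarrow> (nat set \<Rightarrow> real)) \<Rightarrow> (nat set \<Rightarrow> real) set \<Rightarrow> bool" where
  "K_nonneg B K \<longleftrightarrow> B ` K \<subseteq> K"

definition K_pos :: "(nat set \<Rightarrow> real) set \<Rightarrow> ((nat set \<Rightarrow> real) \<Rightarrow> (nat set \<Rightarrow> real)) \<Rightarrow> (nat set \<Rightarrow> real) set \<Rightarrow> bool" where
  "K_pos V B K \<longleftrightarrow> B ` (K - {\<lambda>S. 0}) \<subseteq> (top_of_set V) interior_of K"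

definition GTP :: "real mat \<Rightarrow> (nat \<Rightarrow> (nat set \<Rightarrow> real) set) \<Rightarrow> bool" where
  "GTP A K \<longleftrightarrow> (\<forall>j\<in>{1..dim_row A}. K_nonneg (ext_pow j A) (K j))"

definition GSTP :: "real mat \<Rightarrow> (nat \<Rightarrow> (nat set \<Rightarrow> real) set) \<Rightarrow> bool" where
  "GSTP A K \<longleftrightarrow> (\<forall>j\<in>{1..dim_row A}. K_pos (ext_space (dim_row A) j) (ext_pow j A) (K j))"

end

theory Submission
  imports Defs "HOL-Computational_Algebra.Fundamental_Theorem_Algebra" "Jordan_Normal_Form.Jordan_Normal_Form_Existence"
begin

lemma pick_image_card:
  assumes "finite U"
  shows "pick U ` {0..<card U} = U"
proof
  show "pick U ` {0..<card U} \<subseteq> U" using pick_in_set_le by auto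
  show "U \<subseteq> pick U ` {0..<card U}"
  proof
    fix x assume x: "x \<in> U"
    have "{a\<in>U. a < x} \<subset> U" using x by auto
    hence "card {a\<in>U. a < x} < card U" using assms psubset_card_mono by blast
    hence "card {a\<in>U. a < x} \<in> {0..<card U}" by simp
    thus "x \<in> pick U ` {0..<card U}" using pick_card_in_set[OF x] by (metis image_eqI)
  qed
qed

lemma pick_inj_on: "inj_on (pick U) {0..<card U}"
proof (rule inj_onI)
  fix x y assume "x \<in> {0..<card U}" "y \<in> {0..<card U}" "pick U x = pick U y"
  thus "x = y" using pick_mono_le[of x U y] pick_mono_le[of y U x] by (cases "x < y"; cases "y < x"; simp)
qed
lemma cauchy_binet:
  fixes C :: "'a::comm_ring_1 mat"
  assumes C: "C \<in> carrier_mat m n" and D: "D \<in> carrier_mat n m"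
  shows "det (C * D) = (\<Sum>U\<in>{U. U \<subseteq> {0..<n} \<and> card U = m}.
           det (submatrix C UNIV U) * det (submatrix D U UNIV))"
proof -
  let ?M = "{0..<m}" and ?N = "{0..<n}"
  let ?F = "{f. (\<forall>i\<in>?M. f i \<in> ?N) \<and> (\<forall>i. i \<notin> ?M \<longrightarrow> f i = i)}"
  let ?G = "{f\<in>?F. inj_on f ?M}"
  let ?Js = "{U. U \<subseteq> ?N \<and> card U = m}"
  let ?P = "{p. p permutes ?M}"
  let ?g = "\<lambda>f. (\<Prod>i\<in>?M. C $$ (i, f i)) * det (mat\<^sub>r m m (\<lambda>i. row D (f i)))"
  have finF: "finite ?F" by (rule finite_bounded_functions, auto)
  have "det (C * D) = (\<Sum>f\<in>?F. det (mat\<^sub>r m m (\<lambda>i. C $$ (i, f i) \<cdot>\<^sub>v row D (f i))))"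
    unfolding mat_mul_finsum_alt[OF C D]
    by (rule det_linear_rows_sum, insert D, auto)
  also have "\<dots> = (\<Sum>f\<in>?F. ?g f)"
    by (rule sum.cong[OF refl], subst det_rows_mul, insert D, auto)
  also have "\<dots> = (\<Sum>f\<in>?G. ?g f)"
  proof (rule sum.mono_neutral_right[OF finF])
    show "?G \<subseteq> ?F" by blast
    show "\<forall>f\<in>?F - ?G. ?g f = 0"
    proof
    fix f assume "f \<in> ?F - ?G"
    hence f: "f \<in> ?F" and ni: "\<not> inj_on f ?M" by auto
    then obtain i j where ij: "f i = f j" "i \<noteq> j" "i < m" "j < m"
      unfolding inj_on_def by auto
    have "det (mat\<^sub>r m m (\<lambda>i. row D (f i))) = 0"
      by (rule det_identical_rows[OF _ ij(2-4)], insert ij, auto)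
    thus "?g f = 0" by simp
  qed
  qed
  also have "\<dots> = (\<Sum>(U,p)\<in>Sigma ?Js (\<lambda>_. ?P). ?g (\<lambda>i. if i < m then pick U (p i) else i))"
  proof (rule sym, rule sum.reindex_bij_witness[where j = "\<lambda>(U,p). (\<lambda>i. if i < m then pick U (p i) else i)"
        and i = "\<lambda>f. (f ` ?M, \<lambda>i. if i < m then card {a\<in>f ` ?M. a < f i} else i)"])
    fix a assume a: "a \<in> Sigma ?Js (\<lambda>_. ?P)"
    obtain U p where ap: "a = (U,p)" by force
    with a have U: "U \<subseteq> ?N" "card U = m" and p: "p permutes ?M" by auto
    have finU: "finite U" using U finite_subset by blast
    let ?f = "\<lambda>i. if i < m then pick U (p i) else i"
    have pM: "p i < m" if "i < m" for i using p that permutes_in_image by fastforce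
    have img: "?f ` ?M = U"
    proof -
      have "?f ` ?M = pick U ` (p ` ?M)" by (auto simp: image_iff)
      also have "p ` ?M = ?M" using permutes_image[OF p] .
      finally show ?thesis using pick_image_card[OF finU] U by simp
    qed
    have e: "(\<lambda>i. if i < m then card {a\<in>?f ` ?M. a < ?f i} else i) = p"
    proof (rule ext)
      fix i show "(if i < m then card {a\<in>?f ` ?M. a < ?f i} else i) = p i"
        unfolding img using card_pick_le[of "p i" U] pM U p permutes_not_in[OF p, of i] by auto
    qed
    show "(\<lambda>f. (f ` ?M, \<lambda>i. if i < m then card {a\<in>f ` ?M. a < f i} else i))
           ((\<lambda>(U,p). (\<lambda>i. if i < m then pick U (p i) else i)) a) = a"
      unfolding ap prod.case using img e by simp
    show "(\<lambda>(U,p). (\<lambda>i. if i < m then pick U (p i) else i)) a \<in> ?G"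
    proof -
      have "pick U (p i) < n" if "i < m" for i
        using pick_in_set_le[of "p i" U] pM[OF that] U by auto
      hence "?f \<in> ?F" by auto
      moreover have "inj_on ?f ?M"
      proof (rule inj_onI)
        fix x y assume xy: "x \<in> ?M" "y \<in> ?M" "?f x = ?f y"
        hence "pick U (p x) = pick U (p y)" by simp
        moreover have "p x \<in> {0..<card U}" "p y \<in> {0..<card U}" using pM xy U by auto
        ultimately have "p x = p y" using pick_inj_on[of U] unfolding inj_on_def by blast
        thus "x = y" using permutes_inj[OF p] unfolding inj_def by blast
      qed
      ultimately show ?thesis unfolding ap prod.case by blast
    qed
  next
    fix f assume f: "f \<in> ?G"
    let ?U = "f ` ?M"
    let ?p = "\<lambda>i. if i < m then card {a\<in>?U. a < f i} else i"
    have fM: "f i < n" if "i < m" for i using f that by auto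
    have injf: "inj_on f ?M" using f by blast
    have cU: "card ?U = m" using card_image[OF injf] by simp
    have finU: "finite ?U" by blast
    have pm: "?p i < m" if "i < m" for i
    proof -
      have "f i \<in> ?U" using that by simp
      hence "{a\<in>?U. a < f i} \<subset> ?U" by blast
      from psubset_card_mono[OF finU this] show ?thesis using that cU by simp
    qed
    have pinv: "pick ?U (?p i) = f i" if "i < m" for i
    proof -
      have "f i \<in> ?U" using that by simp
      from pick_card_in_set[OF this] show ?thesis using that by simp
    qed
    have "?p permutes ?M"
    proof (rule inj_on_nat_permutes)
      show "inj_on ?p ?M"
      proof (rule inj_onI)
        fix x y assume xy: "x \<in> ?M" "y \<in> ?M" "?p x = ?p y"
        have "f x = pick ?U (?p x)" using pinv[of x] xy by simp
        also have "\<dots> = pick ?U (?p y)" using xy(3) by simp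
        also have "\<dots> = f y" using pinv[of y] xy by simp
        finally have "f x = f y" .
        thus "x = y" using injf xy unfolding inj_on_def by blast
      qed
      show "?p \<in> ?M \<rightarrow> ?M" using pm by simp
      show "finite ?M" by simp
      show "\<And>i. i \<notin> ?M \<Longrightarrow> ?p i = i" by simp
    qed
    moreover have "?U \<subseteq> ?N" using fM by auto
    ultimately show "(f ` ?M, ?p) \<in> Sigma ?Js (\<lambda>_. ?P)" using cU by simp
    have "(\<lambda>i. if i < m then pick ?U (?p i) else i) = f"
    proof (rule ext)
      fix i show "(if i < m then pick ?U (?p i) else i) = f i"
        using pinv[of i] f by (cases "i < m") auto
    qed
    thus "(\<lambda>(U,p). (\<lambda>i. if i < m then pick U (p i) else i)) (f ` ?M, ?p) = f"
      unfolding prod.case .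
  next
    fix a assume "a \<in> Sigma ?Js (\<lambda>_. ?P)"
    then obtain U p where ap: "a = (U,p)" by force
    show "?g ((\<lambda>(U,p). (\<lambda>i. if i < m then pick U (p i) else i)) a) = (case a of (U,p) \<Rightarrow> ?g (\<lambda>i. if i < m then pick U (p i) else i))"
      unfolding ap prod.case ..
  qed
  also have "\<dots> = (\<Sum>U\<in>?Js. \<Sum>p\<in>?P. ?g (\<lambda>i. if i < m then pick U (p i) else i))"
    by (rule sum.Sigma[symmetric], auto intro: finite_subset[of _ "Pow ?N"] finite_permutations)
  also have "\<dots> = (\<Sum>U\<in>?Js. det (submatrix C UNIV U) * det (submatrix D U UNIV))"
  proof (rule sum.cong[OF refl])
    fix U assume U: "U \<in> ?Js"
    have "{i. i < n \<and> i \<in> U} = U" using U by auto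
    hence cU: "card {i. i < n \<and> i \<in> U} = m" using U by simp
    let ?SC = "submatrix C UNIV U" and ?SD = "submatrix D U UNIV"
    have cM: "card {i. i < m \<and> i \<in> (UNIV::nat set)} = m" by simp
    have dC: "dim_row C = m" "dim_col C = n" and dD: "dim_row D = n" "dim_col D = m" using C D by auto
    have SC: "?SC \<in> carrier_mat m m"
      by (rule carrier_matI, unfold dim_submatrix dC, insert cU cM, auto)
    have SD: "?SD \<in> carrier_mat m m"
      by (rule carrier_matI, unfold dim_submatrix dD, insert cU cM, auto)
    have SCi: "?SC $$ (i,k) = C $$ (i, pick U k)" if "i < m" "k < m" for i k
    proof -
      have "i < card {i. i < dim_row C \<and> i \<in> UNIV}" "k < card {j. j < dim_col C \<and> j \<in> U}"
        using C cU cM that by auto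
      from submatrix_index[OF this] show ?thesis unfolding pick_UNIV .
    qed
    have SDi: "?SD $$ (k,l) = D $$ (pick U k, l)" if "l < m" "k < m" for k l
    proof -
      have "k < card {i. i < dim_row D \<and> i \<in> U}" "l < card {j. j < dim_col D \<and> j \<in> UNIV}"
        using D cU cM that by auto
      from submatrix_index[OF this] show ?thesis unfolding pick_UNIV .
    qed
    have "(\<Sum>p\<in>?P. ?g (\<lambda>i. if i < m then pick U (p i) else i))
        = (\<Sum>p\<in>?P. (\<Prod>i\<in>?M. C $$ (i, pick U (p i))) * (signof p * det ?SD))"
    proof (rule sum.cong[OF refl])
      fix p assume p: "p \<in> ?P"
      hence pM: "p i < m" if "i < m" for i using that permutes_in_image by fastforce
      have pU: "pick U (p i) < n" if "i < m" for i
        using pick_in_set_le[of "p i" U] pM[OF that] U by auto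
      have "mat\<^sub>r m m (\<lambda>i. row D (if i < m then pick U (p i) else i)) = mat m m (\<lambda>(i,j). ?SD $$ (p i, j))"
      proof (rule eq_matI)
        fix i j assume ij: "i < dim_row (mat m m (\<lambda>(i,j). ?SD $$ (p i, j)))" "j < dim_col (mat m m (\<lambda>(i,j). ?SD $$ (p i, j)))"
        hence ij: "i < m" "j < m" by auto
        have "mat\<^sub>r m m (\<lambda>i. row D (if i < m then pick U (p i) else i)) $$ (i,j) = D $$ (pick U (p i), j)"
          using ij pU[OF ij(1)] D by auto
        also have "\<dots> = ?SD $$ (p i, j)" using SDi[OF ij(2) pM[OF ij(1)]] by simp
        finally show "mat\<^sub>r m m (\<lambda>i. row D (if i < m then pick U (p i) else i)) $$ (i,j) = mat m m (\<lambda>(i,j). ?SD $$ (p i, j)) $$ (i,j)"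
          using ij by simp
      qed auto
      hence "det (mat\<^sub>r m m (\<lambda>i. row D (if i < m then pick U (p i) else i))) = signof p * det ?SD"
        using det_permute_rows[OF SD] p by simp
      moreover have "(\<Prod>i\<in>?M. C $$ (i, if i < m then pick U (p i) else i)) = (\<Prod>i\<in>?M. C $$ (i, pick U (p i)))"
        by (rule prod.cong) auto
      ultimately show "?g (\<lambda>i. if i < m then pick U (p i) else i) = (\<Prod>i\<in>?M. C $$ (i, pick U (p i))) * (signof p * det ?SD)"
        by simp
    qed
    also have "\<dots> = (\<Sum>p\<in>?P. signof p * (\<Prod>i\<in>?M. ?SC $$ (i, p i))) * det ?SD"
      unfolding sum_distrib_right
    proof (rule sum.cong[OF refl])
      fix p assume p: "p \<in> ?P"
      hence pM: "p i < m" if "i < m" for i using that permutes_in_image by fastforce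
      have "(\<Prod>i\<in>?M. ?SC $$ (i, p i)) = (\<Prod>i\<in>?M. C $$ (i, pick U (p i)))"
        by (rule prod.cong[OF refl], auto simp: SCi pM)
      thus "(\<Prod>i\<in>?M. C $$ (i, pick U (p i))) * (signof p * det ?SD) = signof p * (\<Prod>i\<in>?M. ?SC $$ (i, p i)) * det ?SD"
        by (simp add: ac_simps)
    qed
    also have "\<dots> = det ?SC * det ?SD" using det_def'[OF SC] by simp
    finally show "(\<Sum>p\<in>?P. ?g (\<lambda>i. if i < m then pick U (p i) else i)) = det ?SC * det ?SD" .
  qed
  finally show ?thesis .
qed

lemma strict_mono_perm_id:
  fixes p :: "nat \<Rightarrow> nat"
  assumes p: "p permutes {0..<j}" and mono: "\<And>x y. x < y \<Longrightarrow> y < j \<Longrightarrow> p x < p y"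
  shows "p = id"
proof -
  have pj: "p i < j" if "i < j" for i using permutes_in_image[OF p, of i] that by auto
  have ge: "i \<le> p i" if "i < j" for i
    using that
  proof (induction i)
    case (Suc i)
    hence "i \<le> p i" by simp
    moreover have "p i < p (Suc i)" using mono[of i "Suc i"] Suc.prems by simp
    ultimately show ?case by simp
  qed simp
  have le: "\<forall>i. i + k < j \<longrightarrow> p i + k \<le> p (i + k)" for k
  proof (induction k)
    case (Suc k)
    show ?case
    proof (intro allI impI)
      fix i assume "i + Suc k < j"
      hence "p i + k \<le> p (i + k)" "p (i + k) < p (i + Suc k)" using Suc.IH mono[of "i+k" "i + Suc k"] by auto
      thus "p i + Suc k \<le> p (i + Suc k)" by simp
    qed
  qed simp
  show ?thesis
  proof (rule ext)
    fix i show "p i = id i"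
    proof (cases "i < j")
      case True
      have "i + (j - 1 - i) < j" using True by simp
      hence "p i + (j - 1 - i) \<le> p (i + (j - 1 - i))" using le[of "j - 1 - i"] by blast
      moreover have "p (i + (j - 1 - i)) < j" using pj True by simp
      ultimately have "p i \<le> i" using True by simp
      with ge[OF True] show ?thesis by simp
    next
      case False thus ?thesis using permutes_not_in[OF p] by simp
    qed
  qed
qed

lemma jsubsets_card: assumes "S \<in> jsubsets n j" shows "card {i. i < n \<and> i \<in> S} = j" "finite S" "card S = j" "S \<subseteq> {0..<n}"
proof -
  show fS: "S \<subseteq> {0..<n}" "card S = j" using assms unfolding jsubsets_def by auto
  have "{i. i < n \<and> i \<in> S} = S" using fS by auto
  thus "card {i. i < n \<and> i \<in> S} = j" using fS by simp
  show "finite S" using fS finite_subset by blast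
qed

lemma pick_js: assumes "S \<in> jsubsets n j" "i < j" shows "pick S i \<in> S" "pick S i < n"
  using pick_in_set_le[of i S] assms jsubsets_card[OF assms(1)] by auto

lemma minor_leibniz:
  assumes B: "B \<in> carrier_mat n n" and S: "S \<in> jsubsets n j" and T: "T \<in> jsubsets n j"
  shows "det (submatrix B S T) = (\<Sum>p\<in>{p. p permutes {0..<j}}. signof p * (\<Prod>i\<in>{0..<j}. B $$ (pick S i, pick T (p i))))"
proof -
  have dB: "dim_row B = n" "dim_col B = n" using B by auto
  have SB: "submatrix B S T \<in> carrier_mat j j"
    by (rule carrier_matI, unfold dim_submatrix dB, insert jsubsets_card(1)[OF S] jsubsets_card(1)[OF T], auto)
  show ?thesis unfolding det_def'[OF SB]
  proof (rule sum.cong[OF refl])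
    fix p assume "p \<in> {p. p permutes {0..<j}}"
    hence pj: "p i < j" if "i < j" for i using permutes_in_image that by fastforce
    show "signof p * (\<Prod>i\<in>{0..<j}. submatrix B S T $$ (i, p i)) = signof p * (\<Prod>i\<in>{0..<j}. B $$ (pick S i, pick T (p i)))"
    proof (rule arg_cong[where f = "\<lambda>x. signof p * x"], rule prod.cong[OF refl])
      fix i assume "i \<in> {0..<j}"
      hence "i < card {i. i < dim_row B \<and> i \<in> S}" "p i < card {i. i < dim_col B \<and> i \<in> T}"
        using pj jsubsets_card(1)[OF S] jsubsets_card(1)[OF T] dB by auto
      from submatrix_index[OF this] show "submatrix B S T $$ (i, p i) = B $$ (pick S i, pick T (p i))" .
    qed
  qed
qed

lemma bidiag_minor:
  fixes B :: "'a :: idom mat"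
  assumes B: "B \<in> carrier_mat n n" and S: "S \<in> jsubsets n j" and T: "T \<in> jsubsets n j"
    and bid: "\<And>i k. i < n \<Longrightarrow> k < n \<Longrightarrow> B $$ (i,k) \<noteq> 0 \<Longrightarrow> k = i \<or> k = Suc i"
  shows "det (submatrix B S T) = (\<Prod>i\<in>{0..<j}. B $$ (pick S i, pick T i))"
proof -
  let ?P = "{p. p permutes {0..<j}}"
  let ?t = "\<lambda>p. signof p * (\<Prod>i\<in>{0..<j}. B $$ (pick S i, pick T (p i)))"
  have idP: "id \<in> ?P" by (simp add: permutes_id)
  have finP: "finite ?P" by (simp add: finite_permutations)
  have zero: "?t p = 0" if p: "p \<in> ?P - {id}" for p
  proof (rule ccontr)
    assume "?t p \<noteq> 0"
    hence nz: "B $$ (pick S i, pick T (p i)) \<noteq> 0" if "i < j" for i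
      using that by auto
    have pp: "p permutes {0..<j}" using p by auto
    have pj: "p i < j" if "i < j" for i using permutes_in_image[OF pp, of i] that by auto
    have near: "pick T (p i) = pick S i \<or> pick T (p i) = Suc (pick S i)" if "i < j" for i
      using bid[OF pick_js(2)[OF S that] pick_js(2)[OF T pj[OF that]] nz[OF that]] .
    have "p = id"
    proof (rule strict_mono_perm_id[OF pp])
      fix x y assume xy: "x < y" "y < j"
      show "p x < p y"
      proof (rule ccontr)
        assume "\<not> p x < p y"
        moreover have "p x \<noteq> p y" using permutes_inj[OF pp] xy unfolding inj_def by auto
        ultimately have "p y < p x" by simp
        hence "pick T (p y) < pick T (p x)" using pick_mono_le[of "p x" T "p y"] pj xy jsubsets_card(3)[OF T] by auto
        moreover have "pick S x < pick S y" using pick_mono_le[of y S x] xy jsubsets_card(3)[OF S] by auto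
        moreover note near[of x] near[of y]
        ultimately show False using xy by auto
      qed
    qed
    with p show False by auto
  qed
  have "det (submatrix B S T) = sum ?t ?P" using minor_leibniz[OF B S T] .
  also have "\<dots> = ?t id + sum ?t (?P - {id})" using sum.remove[OF finP idP] .
  also have "sum ?t (?P - {id}) = 0" using zero by (intro sum.neutral) blast
  finally show ?thesis by (simp add: sign_id)
qed

lemma pick_eq_imp_eq: assumes S: "S \<in> jsubsets n j" and T: "T \<in> jsubsets n j"
  and eq: "\<And>i. i < j \<Longrightarrow> pick S i = pick T i" shows "S = T"
proof -
  have "S = pick S ` {0..<j}" using pick_image_card[OF jsubsets_card(2)[OF S]] jsubsets_card(3)[OF S] by simp
  also have "\<dots> = pick T ` {0..<j}" using eq by (intro image_cong) auto
  also have "\<dots> = T" using pick_image_card[OF jsubsets_card(2)[OF T]] jsubsets_card(3)[OF T] by simp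
  finally show ?thesis .
qed

lemma diag_minor:
  fixes B :: "'a :: idom mat"
  assumes B: "B \<in> carrier_mat n n" and S: "S \<in> jsubsets n j" and T: "T \<in> jsubsets n j"
    and dg: "\<And>i k. i < n \<Longrightarrow> k < n \<Longrightarrow> i \<noteq> k \<Longrightarrow> B $$ (i,k) = 0"
  shows "det (submatrix B S T) = (if S = T then (\<Prod>x\<in>S. B $$ (x,x)) else 0)"
proof -
  have bid: "k = i \<or> k = Suc i" if "i < n" "k < n" "B $$ (i,k) \<noteq> 0" for i k
    using dg[OF that(1,2)] that(3) by auto
  have d: "det (submatrix B S T) = (\<Prod>i\<in>{0..<j}. B $$ (pick S i, pick T i))"
    by (rule bidiag_minor[OF B S T bid])
  show ?thesis
  proof (cases "S = T")
    case True
    have "(\<Prod>i\<in>{0..<j}. B $$ (pick S i, pick S i)) = (\<Prod>x\<in>pick S ` {0..<j}. B $$ (x, x))"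
      using pick_inj_on[of S] jsubsets_card(3)[OF S] by (simp add: prod.reindex)
    also have "pick S ` {0..<j} = S" using pick_image_card[OF jsubsets_card(2)[OF S]] jsubsets_card(3)[OF S] by simp
    finally show ?thesis using d True by simp
  next
    case False
    then obtain i where i: "i < j" "pick S i \<noteq> pick T i" using pick_eq_imp_eq[OF S T] by blast
    hence "B $$ (pick S i, pick T i) = 0" using dg pick_js(2)[OF S i(1)] pick_js(2)[OF T i(1)] by blast
    hence "(\<Prod>i\<in>{0..<j}. B $$ (pick S i, pick T i)) = 0" using i(1) by (intro prod_zero) auto
    thus ?thesis using d False by simp
  qed
qed

lemma js_finite: "finite (jsubsets n j)"
  unfolding jsubsets_def by (rule finite_subset[of _ "Pow {0..<n}"]) auto

lemma sub_sub_eq: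
  assumes A: "A \<in> carrier_mat n n" and S: "S \<in> jsubsets n j" and U: "U \<in> jsubsets n j"
  shows "submatrix (submatrix A S UNIV) UNIV U = submatrix A S U"
proof -
  have dA: "dim_row A = n" "dim_col A = n" using A by auto
  have cS: "card {i. i < n \<and> i \<in> S} = j" and cU: "card {i. i < n \<and> i \<in> U} = j"
    using jsubsets_card(1)[OF S] jsubsets_card(1)[OF U] by auto
  have cN: "card {i. i < n \<and> i \<in> (UNIV::nat set)} = n" by simp
  have cJ: "card {i. i < j \<and> i \<in> (UNIV::nat set)} = j" by simp
  have d1: "dim_row (submatrix A S UNIV) = j" "dim_col (submatrix A S UNIV) = n"
    unfolding dim_submatrix dA cS cN by auto
  show ?thesis
  proof (rule eq_matI)
    show "dim_row (submatrix (submatrix A S UNIV) UNIV U) = dim_row (submatrix A S U)"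
      unfolding dim_submatrix d1 dA cS cJ by simp
    show "dim_col (submatrix (submatrix A S UNIV) UNIV U) = dim_col (submatrix A S U)"
      unfolding dim_submatrix d1 dA using cU by simp
    fix i k assume i: "i < dim_row (submatrix A S U)" and k: "k < dim_col (submatrix A S U)"
    hence ik: "i < j" "k < j" unfolding dim_submatrix dA cS cU by auto
    have pk: "pick U k < n" using pick_js(2)[OF U ik(2)] .
    have "submatrix (submatrix A S UNIV) UNIV U $$ (i,k) = submatrix A S UNIV $$ (i, pick U k)"
      using submatrix_index[of i "submatrix A S UNIV" UNIV k U] ik unfolding d1 cJ cU pick_UNIV by simp
    also have "\<dots> = A $$ (pick S i, pick U k)"
      using submatrix_index[of i A S "pick U k" UNIV] ik pk unfolding dA cS cN pick_UNIV by simp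
    also have "\<dots> = submatrix A S U $$ (i,k)"
      using submatrix_index[of i A S k U] ik unfolding dA cS cU by simp
    finally show "submatrix (submatrix A S UNIV) UNIV U $$ (i,k) = submatrix A S U $$ (i,k)" .
  qed
qed

lemma sub_sub_eq2:
  assumes A: "A \<in> carrier_mat n n" and S: "S \<in> jsubsets n j" and U: "U \<in> jsubsets n j"
  shows "submatrix (submatrix A UNIV S) U UNIV = submatrix A U S"
proof -
  have dA: "dim_row A = n" "dim_col A = n" using A by auto
  have cS: "card {i. i < n \<and> i \<in> S} = j" and cU: "card {i. i < n \<and> i \<in> U} = j"
    using jsubsets_card(1)[OF S] jsubsets_card(1)[OF U] by auto
  have cN: "card {i. i < n \<and> i \<in> (UNIV::nat set)} = n" by simp
  have cJ: "card {i. i < j \<and> i \<in> (UNIV::nat set)} = j" by simp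
  have d1: "dim_row (submatrix A UNIV S) = n" "dim_col (submatrix A UNIV S) = j"
    unfolding dim_submatrix dA cS cN by auto
  show ?thesis
  proof (rule eq_matI)
    show "dim_row (submatrix (submatrix A UNIV S) U UNIV) = dim_row (submatrix A U S)"
      unfolding dim_submatrix d1 dA using cU by simp
    show "dim_col (submatrix (submatrix A UNIV S) U UNIV) = dim_col (submatrix A U S)"
      unfolding dim_submatrix d1 dA cS cJ by simp
    fix i k assume i: "i < dim_row (submatrix A U S)" and k: "k < dim_col (submatrix A U S)"
    hence ik: "i < j" "k < j" unfolding dim_submatrix dA cS cU by auto
    have pk: "pick U i < n" using pick_js(2)[OF U ik(1)] .
    have "submatrix (submatrix A UNIV S) U UNIV $$ (i,k) = submatrix A UNIV S $$ (pick U i, k)"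
      using submatrix_index[of i "submatrix A UNIV S" U k UNIV] ik unfolding d1 cJ cU pick_UNIV by simp
    also have "\<dots> = A $$ (pick U i, pick S k)"
      using submatrix_index[of "pick U i" A UNIV k S] ik pk unfolding dA cS cN pick_UNIV by simp
    also have "\<dots> = submatrix A U S $$ (i,k)"
      using submatrix_index[of i A U k S] ik unfolding dA cS cU by simp
    finally show "submatrix (submatrix A UNIV S) U UNIV $$ (i,k) = submatrix A U S $$ (i,k)" .
  qed
qed

lemma sub_mult_eq:
  assumes A: "A \<in> carrier_mat n n" and B: "B \<in> carrier_mat n n"
    and S: "S \<in> jsubsets n j" and T: "T \<in> jsubsets n j"
  shows "submatrix (A * B) S T = submatrix A S UNIV * submatrix B UNIV T"
proof -
  have dA: "dim_row A = n" "dim_col A = n" and dB: "dim_row B = n" "dim_col B = n" using A B by auto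
  have cS: "card {i. i < n \<and> i \<in> S} = j" and cT: "card {i. i < n \<and> i \<in> T} = j"
    using jsubsets_card(1)[OF S] jsubsets_card(1)[OF T] by auto
  have cN: "card {i. i < n \<and> i \<in> (UNIV::nat set)} = n" by simp
  have d1: "dim_row (submatrix A S UNIV) = j" "dim_col (submatrix A S UNIV) = n"
    unfolding dim_submatrix dA cS cN by auto
  have d2: "dim_row (submatrix B UNIV T) = n" "dim_col (submatrix B UNIV T) = j"
    unfolding dim_submatrix dB cT cN by auto
  have dAB: "dim_row (A*B) = n" "dim_col (A*B) = n" using dA dB by auto
  show ?thesis
  proof (rule eq_matI)
    show "dim_row (submatrix (A * B) S T) = dim_row (submatrix A S UNIV * submatrix B UNIV T)"
      unfolding dim_submatrix dAB cS using d1 by simp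
    show "dim_col (submatrix (A * B) S T) = dim_col (submatrix A S UNIV * submatrix B UNIV T)"
      unfolding dim_submatrix dAB cT using d2 by simp
    fix i k assume i: "i < dim_row (submatrix A S UNIV * submatrix B UNIV T)"
      and k: "k < dim_col (submatrix A S UNIV * submatrix B UNIV T)"
    hence ik: "i < j" "k < j" using d1 d2 by auto
    have pi: "pick S i < n" using pick_js(2)[OF S ik(1)] .
    have pk: "pick T k < n" using pick_js(2)[OF T ik(2)] .
    have "submatrix (A * B) S T $$ (i,k) = (A*B) $$ (pick S i, pick T k)"
      using submatrix_index[of i "A*B" S k T] ik unfolding dAB cS cT by simp
    also have "\<dots> = (\<Sum>l<n. A $$ (pick S i, l) * B $$ (l, pick T k))"
      using pi pk dA dB by (simp add: scalar_prod_def atLeast0LessThan)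
    also have "\<dots> = (\<Sum>l<n. submatrix A S UNIV $$ (i, l) * submatrix B UNIV T $$ (l, k))"
    proof (rule sum.cong[OF refl])
      fix l assume "l \<in> {..<n}"
      hence l: "l < n" by simp
      have "submatrix A S UNIV $$ (i, l) = A $$ (pick S i, l)"
        using submatrix_index[of i A S l UNIV] ik l unfolding dA cS cN pick_UNIV by simp
      moreover have "submatrix B UNIV T $$ (l, k) = B $$ (l, pick T k)"
        using submatrix_index[of l B UNIV k T] ik l unfolding dB cT cN pick_UNIV by simp
      ultimately show "A $$ (pick S i, l) * B $$ (l, pick T k) = submatrix A S UNIV $$ (i, l) * submatrix B UNIV T $$ (l, k)" by simp
    qed
    also have "\<dots> = (submatrix A S UNIV * submatrix B UNIV T) $$ (i,k)"
      using ik d1 d2 by (simp add: scalar_prod_def atLeast0LessThan)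
    finally show "submatrix (A * B) S T $$ (i,k) = (submatrix A S UNIV * submatrix B UNIV T) $$ (i,k)" .
  qed
qed

lemma minor_mult:
  fixes A B :: "'a :: comm_ring_1 mat"
  assumes A: "A \<in> carrier_mat n n" and B: "B \<in> carrier_mat n n"
    and S: "S \<in> jsubsets n j" and T: "T \<in> jsubsets n j"
  shows "det (submatrix (A * B) S T) = (\<Sum>U\<in>jsubsets n j. det (submatrix A S U) * det (submatrix B U T))"
proof -
  have dA: "dim_row A = n" "dim_col A = n" and dB: "dim_row B = n" "dim_col B = n" using A B by auto
  have cS: "card {i. i < n \<and> i \<in> S} = j" and cT: "card {i. i < n \<and> i \<in> T} = j"
    using jsubsets_card(1)[OF S] jsubsets_card(1)[OF T] by auto
  have cN: "card {i. i < n \<and> i \<in> (UNIV::nat set)} = n" by simp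
  have C: "submatrix A S UNIV \<in> carrier_mat j n"
    by (rule carrier_matI, unfold dim_submatrix dA cS cN, auto)
  have D: "submatrix B UNIV T \<in> carrier_mat n j"
    by (rule carrier_matI, unfold dim_submatrix dB cT cN, auto)
  have js: "jsubsets n j = {U. U \<subseteq> {0..<n} \<and> card U = j}" unfolding jsubsets_def by auto
  show ?thesis unfolding sub_mult_eq[OF A B S T] cauchy_binet[OF C D] js[symmetric]
    by (rule sum.cong[OF refl], simp add: sub_sub_eq[OF A S] sub_sub_eq2[OF B T])
qed

lemma ext_pow_mult:
  assumes A: "A \<in> carrier_mat n n" and B: "B \<in> carrier_mat n n"
  shows "ext_pow j (A * B) f = ext_pow j A (ext_pow j B f)"
proof (rule ext)
  fix S
  have dA: "dim_row A = n" and dB: "dim_row B = n" and dAB: "dim_row (A*B) = n" using A B by auto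
  show "ext_pow j (A * B) f S = ext_pow j A (ext_pow j B f) S"
  proof (cases "S \<in> jsubsets n j")
    case S: True
    have "ext_pow j A (ext_pow j B f) S = (\<Sum>U\<in>jsubsets n j. det (submatrix A S U) *
              (\<Sum>T\<in>jsubsets n j. det (submatrix B U T) * f T))"
      unfolding ext_pow_def dA dB using S by (auto intro!: sum.cong)
    also have "\<dots> = (\<Sum>U\<in>jsubsets n j. \<Sum>T\<in>jsubsets n j. det (submatrix A S U) * det (submatrix B U T) * f T)"
      by (simp add: sum_distrib_left mult.assoc)
    also have "\<dots> = (\<Sum>T\<in>jsubsets n j. \<Sum>U\<in>jsubsets n j. det (submatrix A S U) * det (submatrix B U T) * f T)"
      by (rule sum.swap)
    also have "\<dots> = (\<Sum>T\<in>jsubsets n j. det (submatrix (A * B) S T) * f T)"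
      by (rule sum.cong[OF refl], simp add: minor_mult[OF A B S] sum_distrib_right)
    also have "\<dots> = ext_pow j (A * B) f S" unfolding ext_pow_def dAB using S by simp
    finally show ?thesis by simp
  next
    case False thus ?thesis unfolding ext_pow_def dA dAB by simp
  qed
qed

lemma ext_pow_one:
  assumes f: "f \<in> ext_space n j"
  shows "ext_pow j (1\<^sub>m n) f = f"
proof (rule ext)
  fix S
  show "ext_pow j (1\<^sub>m n) f S = f S"
  proof (cases "S \<in> jsubsets n j")
    case S: True
    have "ext_pow j (1\<^sub>m n) f S = (\<Sum>T\<in>jsubsets n j. det (submatrix (1\<^sub>m n) S T) * f T)"
      unfolding ext_pow_def using S by simp
    also have "\<dots> = (\<Sum>T\<in>jsubsets n j. (if S = T then 1 else 0) * f T)"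
    proof (rule sum.cong[OF refl])
      fix T assume T: "T \<in> jsubsets n j"
      have "det (submatrix (1\<^sub>m n) S T) = (if S = T then (\<Prod>x\<in>S. (1\<^sub>m n :: real mat) $$ (x,x)) else 0)"
        by (rule diag_minor[OF one_carrier_mat S T], simp)
      also have "\<dots> = (if S = T then 1 else 0)"
        using jsubsets_card(4)[OF S] by (auto intro!: prod.neutral)
      finally show "det (submatrix (1\<^sub>m n) S T) * f T = (if S = T then 1 else 0) * f T" by simp
    qed
    also have "\<dots> = (\<Sum>T\<in>jsubsets n j. if S = T then f T else 0)" by (rule sum.cong) auto
    also have "\<dots> = f S" using S js_finite[of n j] by (simp add: sum.delta)
    finally show ?thesis .
  next
    case False
    hence "f S = 0" using f unfolding ext_space_def jsubsets_def by auto
    thus ?thesis unfolding ext_pow_def using False by simp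
  qed
qed

lemma ext_pow_space: "ext_pow j A f \<in> ext_space (dim_row A) j"
  unfolding ext_pow_def ext_space_def jsubsets_def by auto


lemma ext_pow_add: "ext_pow j A (\<lambda>S. x S + y S) = (\<lambda>S. ext_pow j A x S + ext_pow j A y S)"
  unfolding ext_pow_def by (auto simp: distrib_left sum.distrib)

lemma ext_pow_smult: "ext_pow j A (\<lambda>S. c * x S) = (\<lambda>S. c * ext_pow j A x S)"
  unfolding ext_pow_def by (auto simp: sum_distrib_left ac_simps)

lemma ext_pow_neg: "ext_pow j A (\<lambda>S. - x S) = (\<lambda>S. - ext_pow j A x S)"
  using ext_pow_smult[of j A "-1" x] by simp

lemma ext_pow_zero: "ext_pow j A (\<lambda>S. 0) = (\<lambda>S. 0)"
  unfolding ext_pow_def by auto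

lemma ext_pow_cont_coord: "continuous_on UNIV (\<lambda>y. ext_pow j A y S)"
  by (cases "S \<in> jsubsets (dim_row A) j") (auto simp: ext_pow_def intro!: continuous_intros)

lemma ext_pow_cont: "continuous_on UNIV (ext_pow j A)"
  by (rule continuous_on_coordinatewise_then_product, rule ext_pow_cont_coord)

lemma ext_space_closed: "closed (ext_space n j)"
proof -
  have "ext_space n j = (\<Inter>S\<in>- jsubsets n j. {f. f S = 0})"
    unfolding ext_space_def jsubsets_def by auto
  also have "closed \<dots>"
    by (intro closed_INT ballI closed_Collect_eq continuous_intros) simp
  finally show ?thesis .
qed

lemma ext_space_iff: "x \<in> ext_space n j \<longleftrightarrow> (\<forall>S. S \<notin> jsubsets n j \<longrightarrow> x S = 0)"
  unfolding ext_space_def jsubsets_def by blast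

lemma ext_space_add: "x \<in> ext_space n j \<Longrightarrow> y \<in> ext_space n j \<Longrightarrow> (\<lambda>S. x S + y S) \<in> ext_space n j"
  unfolding ext_space_iff by simp

lemma ext_space_smult: "x \<in> ext_space n j \<Longrightarrow> (\<lambda>S. c * x S) \<in> ext_space n j"
  unfolding ext_space_def by auto

lemma ext_space_zero: "(\<lambda>S. 0) \<in> ext_space n j"
  unfolding ext_space_def by auto

lemma ext_space_js: "x \<in> ext_space n j \<Longrightarrow> S \<notin> jsubsets n j \<Longrightarrow> x S = 0"
  unfolding ext_space_def jsubsets_def by auto

context
  fixes P Q :: "real mat" and n j :: nat
  assumes P: "P \<in> carrier_mat n n" and Q: "Q \<in> carrier_mat n n"
    and PQ: "P * Q = 1\<^sub>m n" and QP: "Q * P = 1\<^sub>m n"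
begin

lemma PQ_inv: "y \<in> ext_space n j \<Longrightarrow> ext_pow j P (ext_pow j Q y) = y"
  using ext_pow_mult[OF P Q, of j y] PQ ext_pow_one by simp

lemma QP_inv: "y \<in> ext_space n j \<Longrightarrow> ext_pow j Q (ext_pow j P y) = y"
  using ext_pow_mult[OF Q P, of j y] QP ext_pow_one by simp

lemma Q_space: "ext_pow j Q y \<in> ext_space n j"
  using ext_pow_space[of j Q y] Q by simp

lemma P_space: "ext_pow j P y \<in> ext_space n j"
  using ext_pow_space[of j P y] P by simp

lemma cone_transfer:
  fixes Cz Uz :: "(nat set \<Rightarrow> real) set" and e :: "nat set \<Rightarrow> real"
  assumes Cz_closed: "closed Cz"
    and Cz_add: "\<And>x y. x \<in> Cz \<Longrightarrow> y \<in> Cz \<Longrightarrow> (\<lambda>S. x S + y S) \<in> Cz"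
    and Cz_smult: "\<And>x c. x \<in> Cz \<Longrightarrow> c \<ge> 0 \<Longrightarrow> (\<lambda>S. c * x S) \<in> Cz"
    and Cz_zero: "(\<lambda>S. 0) \<in> Cz"
    and Cz_pointed: "\<And>x. x \<in> Cz \<Longrightarrow> (\<lambda>S. - x S) \<in> Cz \<Longrightarrow> x \<in> ext_space n j \<Longrightarrow> x = (\<lambda>S. 0)"
    and Uz_open: "open Uz" and Uz_sub: "Uz \<inter> ext_space n j \<subseteq> Cz"
    and e: "e \<in> Uz" "e \<in> ext_space n j"
  shows "proper_cone_in (ext_space n j) {y \<in> ext_space n j. ext_pow j Q y \<in> Cz}"
proof -
  let ?V = "ext_space n j"
  let ?K = "{y \<in> ?V. ext_pow j Q y \<in> Cz}"
  let ?U = "?V \<inter> (ext_pow j Q -` Uz)"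
  have UK: "?U \<subseteq> ?K" using Uz_sub Q_space by auto
  have Uo: "openin (top_of_set ?V) ?U"
    by (rule openin_open_Int, rule open_vimage[OF Uz_open ext_pow_cont])
  have "ext_pow j P e \<in> ?U" using P_space QP_inv[OF e(2)] e(1) by auto
  hence int: "top_of_set ?V interior_of ?K \<noteq> {}" using interior_of_maximal[OF UK Uo] by auto
  have closedK: "closed ?K"
  proof -
    have "?K = ?V \<inter> (ext_pow j Q -` Cz)" by auto
    thus ?thesis by (simp add: closed_Int ext_space_closed closed_vimage[OF Cz_closed ext_pow_cont])
  qed
  show ?thesis unfolding proper_cone_in_def
  proof (intro conjI)
    show "?K \<subseteq> ?V" by auto
    show "?K \<noteq> {}" using ext_space_zero[of n j] ext_pow_zero[of j Q] Cz_zero by auto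
    show "\<forall>x\<in>?K. \<forall>y\<in>?K. (\<lambda>S. x S + y S) \<in> ?K"
      using ext_space_add ext_pow_add Cz_add by auto
    show "\<forall>x\<in>?K. \<forall>c::real. c \<ge> 0 \<longrightarrow> (\<lambda>S. c * x S) \<in> ?K"
      using ext_space_smult ext_pow_smult Cz_smult by auto
    show "closed ?K" by (rule closedK)
    show "\<forall>x\<in>?K. (\<lambda>S. - x S) \<in> ?K \<longrightarrow> x = (\<lambda>S. 0)"
    proof (intro ballI impI)
      fix y assume y: "y \<in> ?K" and ny: "(\<lambda>S. - y S) \<in> ?K"
      have "ext_pow j Q y = (\<lambda>S. 0)"
        by (rule Cz_pointed, insert y ny ext_pow_neg[of j Q y] Q_space, auto)
      hence "ext_pow j P (ext_pow j Q y) = (\<lambda>S. 0)" using ext_pow_zero by simp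
      thus "y = (\<lambda>S. 0)" using PQ_inv y by simp
    qed
    show "top_of_set ?V interior_of ?K \<noteq> {}" by (rule int)
  qed
qed

lemma interior_transfer:
  fixes Cz Uz :: "(nat set \<Rightarrow> real) set"
  assumes Uz_open: "open Uz" and Uz_sub: "Uz \<inter> ext_space n j \<subseteq> Cz"
    and y: "y \<in> ext_space n j" "ext_pow j Q y \<in> Uz"
  shows "y \<in> top_of_set (ext_space n j) interior_of {y \<in> ext_space n j. ext_pow j Q y \<in> Cz}"
proof -
  let ?V = "ext_space n j"
  let ?U = "?V \<inter> (ext_pow j Q -` Uz)"
  have UK: "?U \<subseteq> {y \<in> ?V. ext_pow j Q y \<in> Cz}" using Uz_sub Q_space by auto
  have Uo: "openin (top_of_set ?V) ?U"
    by (rule openin_open_Int, rule open_vimage[OF Uz_open ext_pow_cont])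
  show ?thesis using interior_of_maximal[OF UK Uo] y by auto
qed

end

lemma ext_pow_apply: "S \<in> jsubsets (dim_row A) j \<Longrightarrow>
  ext_pow j A x S = (\<Sum>T\<in>jsubsets (dim_row A) j. det (submatrix A S T) * x T)"
  unfolding ext_pow_def by simp

lemma sim_QA:
  fixes P Q J :: "real mat"
  assumes P: "P \<in> carrier_mat n n" and Q: "Q \<in> carrier_mat n n" and J: "J \<in> carrier_mat n n"
    and QP: "Q * P = 1\<^sub>m n"
  shows "Q * (P * J * Q) = J * Q"
proof -
  have PJ: "P * J \<in> carrier_mat n n" using P J by simp
  have "Q * (P * J) * Q = Q * (P * J * Q)" by (rule assoc_mult_mat[OF Q PJ Q])
  moreover have "Q * P * J = Q * (P * J)" by (rule assoc_mult_mat[OF Q P J])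
  ultimately have "Q * (P * J * Q) = 1\<^sub>m n * J * Q" using QP by simp
  thus ?thesis using left_mult_one_mat[OF J] by simp
qed

lemma gtp_cone:
  fixes P Q J :: "real mat"
  assumes P: "P \<in> carrier_mat n n" and Q: "Q \<in> carrier_mat n n" and J: "J \<in> carrier_mat n n"
    and PQ: "P * Q = 1\<^sub>m n" and QP: "Q * P = 1\<^sub>m n"
    and Jnn: "\<And>S T. S \<in> jsubsets n j \<Longrightarrow> T \<in> jsubsets n j \<Longrightarrow> det (submatrix J S T) \<ge> 0"
  shows "proper_cone_in (ext_space n j) {y \<in> ext_space n j. ext_pow j Q y \<in> {x. \<forall>S\<in>jsubsets n j. 0 \<le> x S}}
    \<and> K_nonneg (ext_pow j (P * J * Q)) {y \<in> ext_space n j. ext_pow j Q y \<in> {x. \<forall>S\<in>jsubsets n j. 0 \<le> x S}}"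
proof
  let ?js = "jsubsets n j"
  let ?C0 = "{x. \<forall>S\<in>?js. (0::real) \<le> x S}"
  let ?U0 = "{x. \<forall>S\<in>?js. (0::real) < x S}"
  show "proper_cone_in (ext_space n j) {y \<in> ext_space n j. ext_pow j Q y \<in> ?C0}"
  proof (rule cone_transfer[OF P Q PQ QP, where Uz = ?U0 and e = "\<lambda>S. if S \<in> ?js then 1 else 0"])
    have "?C0 = (\<Inter>S\<in>?js. {x. 0 \<le> x S})" by auto
    also have "closed \<dots>" by (intro closed_INT ballI closed_Collect_le continuous_intros) simp
    finally show "closed ?C0" .
    have "?U0 = (\<Inter>S\<in>?js. {x. 0 < x S})" by auto
    also have "open \<dots>" by (intro open_INT js_finite ballI open_Collect_less continuous_intros) simp
    finally show "open ?U0" .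
    show "\<And>x. x \<in> ?C0 \<Longrightarrow> (\<lambda>S. - x S) \<in> ?C0 \<Longrightarrow> x \<in> ext_space n j \<Longrightarrow> x = (\<lambda>S. 0)"
    proof (rule ext)
      fix x S assume x: "x \<in> ?C0" "(\<lambda>S. - x S) \<in> ?C0" "x \<in> ext_space n j"
      show "x S = 0" using x ext_space_js[OF x(3)] by (cases "S \<in> ?js") force+
    qed
    show "(\<lambda>S. if S \<in> ?js then 1 else 0) \<in> ext_space n j" unfolding ext_space_iff by simp
  qed (auto simp: add_nonneg_nonneg)
  show "K_nonneg (ext_pow j (P * J * Q)) {y \<in> ext_space n j. ext_pow j Q y \<in> ?C0}"
    unfolding K_nonneg_def
  proof (rule image_subsetI)
    fix y assume "y \<in> {y \<in> ext_space n j. ext_pow j Q y \<in> ?C0}"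
    hence y: "y \<in> ext_space n j" and x: "\<forall>S\<in>?js. 0 \<le> ext_pow j Q y S" by auto
    have A: "P * J * Q \<in> carrier_mat n n" using P J Q by simp
    have z: "ext_pow j (P * J * Q) y \<in> ext_space n j" using ext_pow_space[of j "P*J*Q" y] P by simp
    have "ext_pow j Q (ext_pow j (P * J * Q) y) = ext_pow j J (ext_pow j Q y)"
      using ext_pow_mult[OF Q A, of j y] sim_QA[OF P Q J QP] ext_pow_mult[OF J Q, of j y] by simp
    moreover have "\<forall>S\<in>?js. 0 \<le> ext_pow j J (ext_pow j Q y) S"
    proof
      fix S assume S: "S \<in> ?js"
      have dJ: "dim_row J = n" using J by simp
      have "ext_pow j J (ext_pow j Q y) S = (\<Sum>T\<in>?js. det (submatrix J S T) * ext_pow j Q y T)"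
        using ext_pow_apply[of S J j "ext_pow j Q y"] S dJ by simp
      also have "\<dots> \<ge> 0" using x Jnn[OF S] by (auto intro!: sum_nonneg mult_nonneg_nonneg)
      finally show "0 \<le> ext_pow j J (ext_pow j Q y) S" .
    qed
    ultimately show "ext_pow j (P * J * Q) y \<in> {y \<in> ext_space n j. ext_pow j Q y \<in> ?C0}" using z by simp
  qed
qed


lemma gstp_cone:
  fixes P Q D :: "real mat" and \<mu> :: "nat set \<Rightarrow> real"
  assumes P: "P \<in> carrier_mat n n" and Q: "Q \<in> carrier_mat n n" and D: "D \<in> carrier_mat n n"
    and PQ: "P * Q = 1\<^sub>m n" and QP: "Q * P = 1\<^sub>m n"
    and S0: "S0 \<in> jsubsets n j"
    and Dm: "\<And>S T. S \<in> jsubsets n j \<Longrightarrow> T \<in> jsubsets n j \<Longrightarrow> det (submatrix D S T) = (if S = T then \<mu> S else 0)"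
    and mupos: "\<And>S. S \<in> jsubsets n j \<Longrightarrow> \<mu> S > 0"
    and mumax: "\<And>S. S \<in> jsubsets n j \<Longrightarrow> S \<noteq> S0 \<Longrightarrow> \<mu> S < \<mu> S0"
  shows "proper_cone_in (ext_space n j) {y \<in> ext_space n j. ext_pow j Q y \<in> {x. (\<Sum>S\<in>jsubsets n j - {S0}. \<bar>x S\<bar>) \<le> x S0}}
    \<and> K_pos (ext_space n j) (ext_pow j (P * D * Q)) {y \<in> ext_space n j. ext_pow j Q y \<in> {x. (\<Sum>S\<in>jsubsets n j - {S0}. \<bar>x S\<bar>) \<le> x S0}}"
proof
  let ?js = "jsubsets n j"
  let ?R = "?js - {S0}"
  let ?C0 = "{x::nat set \<Rightarrow> real. (\<Sum>S\<in>?R. \<bar>x S\<bar>) \<le> x S0}"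
  let ?U0 = "{x::nat set \<Rightarrow> real. (\<Sum>S\<in>?R. \<bar>x S\<bar>) < x S0}"
  have finR: "finite ?R" using js_finite by blast
  have cS: "continuous_on UNIV (\<lambda>x::nat set \<Rightarrow> real. x S)" for S by simp
  have cR: "continuous_on UNIV (\<lambda>x::nat set \<Rightarrow> real. \<Sum>S\<in>?R. \<bar>x S\<bar>)"
    by (intro continuous_on_sum continuous_on_rabs cS)
  have U0o: "open ?U0" by (rule open_Collect_less[OF cR cS])
  have U0C: "?U0 \<inter> ext_space n j \<subseteq> ?C0" by auto
  show "proper_cone_in (ext_space n j) {y \<in> ext_space n j. ext_pow j Q y \<in> ?C0}"
  proof (rule cone_transfer[OF P Q PQ QP, where Uz = ?U0 and e = "\<lambda>S. if S = S0 then 1 else 0"])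
    show "closed ?C0" by (rule closed_Collect_le[OF cR cS])
    show "open ?U0" by (rule U0o)
    show "?U0 \<inter> ext_space n j \<subseteq> ?C0" by (rule U0C)
    show "(\<lambda>S. if S = S0 then 1 else 0) \<in> ?U0" by simp
    show "(\<lambda>S. if S = S0 then 1 else 0) \<in> ext_space n j" unfolding ext_space_iff using S0 by auto
    show "(\<lambda>S. 0) \<in> ?C0" by simp
    show "\<And>x y. x \<in> ?C0 \<Longrightarrow> y \<in> ?C0 \<Longrightarrow> (\<lambda>S. x S + y S) \<in> ?C0"
    proof -
      fix x y assume x: "x \<in> ?C0" and y: "y \<in> ?C0"
      have "(\<Sum>S\<in>?R. \<bar>x S + y S\<bar>) \<le> (\<Sum>S\<in>?R. \<bar>x S\<bar> + \<bar>y S\<bar>)"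
        by (rule sum_mono, rule abs_triangle_ineq)
      also have "\<dots> = (\<Sum>S\<in>?R. \<bar>x S\<bar>) + (\<Sum>S\<in>?R. \<bar>y S\<bar>)" by (rule sum.distrib)
      finally show "(\<lambda>S. x S + y S) \<in> ?C0" using x y by simp
    qed
    show "\<And>x c. x \<in> ?C0 \<Longrightarrow> c \<ge> 0 \<Longrightarrow> (\<lambda>S. c * x S) \<in> ?C0"
    proof -
      fix x and c :: real assume x: "x \<in> ?C0" and c: "c \<ge> 0"
      have "(\<Sum>S\<in>?R. \<bar>c * x S\<bar>) = c * (\<Sum>S\<in>?R. \<bar>x S\<bar>)"
        using c by (simp add: abs_mult sum_distrib_left)
      also have "\<dots> \<le> c * x S0" using x c by (simp add: mult_left_mono)
      finally show "(\<lambda>S. c * x S) \<in> ?C0" by simp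
    qed
    show "\<And>x. x \<in> ?C0 \<Longrightarrow> (\<lambda>S. - x S) \<in> ?C0 \<Longrightarrow> x \<in> ext_space n j \<Longrightarrow> x = (\<lambda>S. 0)"
    proof -
      fix x assume x: "x \<in> ?C0" and nx: "(\<lambda>S. - x S) \<in> ?C0" and xV: "x \<in> ext_space n j"
      have s0: "0 \<le> (\<Sum>S\<in>?R. \<bar>x S\<bar>)" by (rule sum_nonneg) simp
      from x nx have a: "(\<Sum>S\<in>?R. \<bar>x S\<bar>) \<le> x S0" "(\<Sum>S\<in>?R. \<bar>x S\<bar>) \<le> - x S0" by auto
      have x0: "x S0 = 0" using a s0 by linarith
      have sz: "(\<Sum>S\<in>?R. \<bar>x S\<bar>) = 0" using a s0 by linarith
      have "\<forall>S\<in>?R. \<bar>x S\<bar> = 0" using sum_nonneg_eq_0_iff[OF finR, of "\<lambda>S. \<bar>x S\<bar>"] sz by simp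
      show "x = (\<lambda>S. 0)"
      proof (rule ext)
        fix S show "x S = 0"
          using x0 \<open>\<forall>S\<in>?R. \<bar>x S\<bar> = 0\<close> ext_space_js[OF xV, of S] by (cases "S \<in> ?js"; cases "S = S0") auto
      qed
    qed
  qed
  show "K_pos (ext_space n j) (ext_pow j (P * D * Q)) {y \<in> ext_space n j. ext_pow j Q y \<in> ?C0}"
    unfolding K_pos_def
  proof (rule image_subsetI)
    fix y assume "y \<in> {y \<in> ext_space n j. ext_pow j Q y \<in> ?C0} - {\<lambda>S. 0}"
    hence y: "y \<in> ext_space n j" and xC: "ext_pow j Q y \<in> ?C0" and yn: "y \<noteq> (\<lambda>S. 0)" by auto
    define x where "x = ext_pow j Q y"
    have xC': "(\<Sum>S\<in>?R. \<bar>x S\<bar>) \<le> x S0" using xC unfolding x_def by simp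
    have xV: "x \<in> ext_space n j" unfolding x_def by (rule Q_space[OF P Q PQ QP])
    have s0: "0 \<le> (\<Sum>S\<in>?R. \<bar>x S\<bar>)" by (rule sum_nonneg) simp
    have x0: "x S0 > 0"
    proof (rule ccontr)
      assume "\<not> x S0 > 0"
      hence x0: "x S0 = 0" using xC' s0 by linarith
      have sz: "(\<Sum>S\<in>?R. \<bar>x S\<bar>) = 0" using x0 xC' s0 by linarith
      have "\<forall>S\<in>?R. \<bar>x S\<bar> = 0" using sum_nonneg_eq_0_iff[OF finR, of "\<lambda>S. \<bar>x S\<bar>"] sz by simp
      have "x = (\<lambda>S. 0)"
      proof (rule ext)
        fix S show "x S = 0"
          using x0 \<open>\<forall>S\<in>?R. \<bar>x S\<bar> = 0\<close> ext_space_js[OF xV, of S] by (cases "S \<in> ?js"; cases "S = S0") auto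
      qed
      hence "ext_pow j P x = (\<lambda>S. 0)" using ext_pow_zero by simp
      hence "y = (\<lambda>S. 0)" using PQ_inv[OF P Q PQ QP y] unfolding x_def by simp
      with yn show False by simp
    qed
    have A: "P * D * Q \<in> carrier_mat n n" using P D Q by simp
    let ?z = "ext_pow j (P * D * Q) y"
    have z: "?z \<in> ext_space n j" using ext_pow_space[of j "P*D*Q" y] P by simp
    have Qz: "ext_pow j Q ?z = ext_pow j D x"
      using ext_pow_mult[OF Q A, of j y] sim_QA[OF P Q D QP] ext_pow_mult[OF D Q, of j y] unfolding x_def by simp
    have dD: "dim_row D = n" using D by simp
    have Dx: "ext_pow j D x S = \<mu> S * x S" if S: "S \<in> ?js" for S
    proof -
      have "ext_pow j D x S = (\<Sum>T\<in>?js. det (submatrix D S T) * x T)"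
        using ext_pow_apply[of S D j x] S dD by simp
      also have "\<dots> = (\<Sum>T\<in>?js. if S = T then \<mu> S * x T else 0)"
        by (rule sum.cong[OF refl], simp add: Dm[OF S])
      also have "\<dots> = \<mu> S * x S" using S js_finite[of n j] by (simp add: sum.delta)
      finally show ?thesis .
    qed
    have "(\<Sum>S\<in>?R. \<bar>ext_pow j D x S\<bar>) < ext_pow j D x S0"
    proof (cases "\<exists>S\<in>?R. x S \<noteq> 0")
      case True
      have "(\<Sum>S\<in>?R. \<bar>ext_pow j D x S\<bar>) = (\<Sum>S\<in>?R. \<mu> S * \<bar>x S\<bar>)"
      proof (rule sum.cong[OF refl])
        fix S assume "S \<in> ?R"
        hence S: "S \<in> ?js" by simp
        show "\<bar>ext_pow j D x S\<bar> = \<mu> S * \<bar>x S\<bar>"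
          unfolding Dx[OF S] abs_mult using mupos[OF S] by simp
      qed
      also have "\<dots> < (\<Sum>S\<in>?R. \<mu> S0 * \<bar>x S\<bar>)"
      proof (rule sum_strict_mono_ex1[OF finR])
        show "\<forall>S\<in>?R. \<mu> S * \<bar>x S\<bar> \<le> \<mu> S0 * \<bar>x S\<bar>"
        proof
          fix S assume S: "S \<in> ?R"
          hence "\<mu> S < \<mu> S0" using mumax by blast
          thus "\<mu> S * \<bar>x S\<bar> \<le> \<mu> S0 * \<bar>x S\<bar>" by (intro mult_right_mono) simp_all
        qed
        from True obtain S where S: "S \<in> ?R" "x S \<noteq> 0" by blast
        hence "\<mu> S < \<mu> S0" using mumax by blast
        moreover have "\<bar>x S\<bar> > 0" using S by simp
        ultimately have "\<mu> S * \<bar>x S\<bar> < \<mu> S0 * \<bar>x S\<bar>" by (rule mult_strict_right_mono)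
        thus "\<exists>S\<in>?R. \<mu> S * \<bar>x S\<bar> < \<mu> S0 * \<bar>x S\<bar>" using S by blast
      qed
      also have "\<dots> = \<mu> S0 * (\<Sum>S\<in>?R. \<bar>x S\<bar>)" by (simp add: sum_distrib_left)
      also have "\<dots> \<le> \<mu> S0 * x S0" using xC' mupos[OF S0] by (simp add: mult_left_mono)
      also have "\<dots> = ext_pow j D x S0" using Dx[OF S0] by simp
      finally show ?thesis .
    next
      case False
      have "(\<Sum>S\<in>?R. \<bar>ext_pow j D x S\<bar>) = 0"
      proof (rule sum.neutral, rule ballI)
        fix S assume S: "S \<in> ?R"
        hence "x S = 0" using False by blast
        thus "\<bar>ext_pow j D x S\<bar> = 0" using Dx[of S] S by simp
      qed
      also have "0 < \<mu> S0 * x S0" using x0 mupos[OF S0] by simp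
      also have "\<dots> = ext_pow j D x S0" using Dx[OF S0] by simp
      finally show ?thesis .
    qed
    hence "ext_pow j Q ?z \<in> ?U0" using Qz by simp
    thus "?z \<in> top_of_set (ext_space n j) interior_of {y \<in> ext_space n j. ext_pow j Q y \<in> ?C0}"
      by (rule interior_transfer[OF P Q PQ QP U0o U0C z])
  qed
qed

interpretation of_real_poly_hom: map_poly_inj_idom_hom "complex_of_real" ..

lemma real_split:
  fixes p :: "real poly"
  assumes roots: "\<And>z. poly (map_poly complex_of_real p) z = 0 \<Longrightarrow> z \<in> \<real>"
  shows "\<exists>as. p = Polynomial.smult (lead_coeff p) (\<Prod>a\<leftarrow>as. [:-a,1:])"
  using roots
proof (induction "degree p" arbitrary: p)
  case 0
  then obtain c where "p = [:c:]" by (metis degree_eq_zeroE)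
  thus ?case by (intro exI[of _ "[]"]) simp
next
  case (Suc k p)
  have "degree (map_poly complex_of_real p) = Suc k" using Suc(2) by simp
  hence "\<not> constant (poly (map_poly complex_of_real p))" by (simp add: constant_degree)
  from fundamental_theorem_of_algebra[OF this] obtain z where z: "poly (map_poly complex_of_real p) z = 0" by blast
  from Suc(3)[OF z] obtain r where zr: "z = complex_of_real r" by (metis Reals_cases)
  have "complex_of_real (poly p r) = 0" using z unfolding zr by (simp add: of_real_poly_hom.poly_map_poly)
  hence "poly p r = 0" by simp
  hence "[:-r,1:] dvd p" by (simp add: dvd_iff_poly_eq_0)
  then obtain q where pq: "p = [:-r,1:] * q" by (elim dvdE)
  have q0: "q \<noteq> 0" using pq Suc(2) by auto
  have "degree p = degree ([:-r,1:] * q)" by (simp only: pq)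
  also have "\<dots> = degree [:-r,1:] + degree q" by (rule degree_mult_eq) (auto simp: q0)
  finally have dq: "degree q = k" using Suc(2) by simp
  have "z \<in> \<real>" if "poly (map_poly complex_of_real q) z = 0" for z
  proof -
    have "poly (map_poly complex_of_real p) z = poly (map_poly complex_of_real [:-r,1:]) z * poly (map_poly complex_of_real q) z"
      unfolding pq of_real_poly_hom.hom_mult by (simp add: algebra_simps)
    also have "\<dots> = 0" using that by simp
    finally show ?thesis by (rule Suc(3))
  qed
  from Suc(1)[OF dq[symmetric] this] obtain as where q: "q = Polynomial.smult (lead_coeff q) (\<Prod>a\<leftarrow>as. [:-a,1:])" by blast
  have "lead_coeff p = lead_coeff ([:-r,1:] * q)" by (simp only: pq)
  also have "\<dots> = lead_coeff [:-r,1:] * lead_coeff q" by (rule lead_coeff_mult)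
  finally have "lead_coeff p = lead_coeff q" by simp
  have "Polynomial.smult (lead_coeff q) (\<Prod>a\<leftarrow>r#as. [:-a,1:]) = [:-r,1:] * Polynomial.smult (lead_coeff q) (\<Prod>a\<leftarrow>as. [:-a,1:])"
    by (simp only: list.map prod_list.Cons mult_smult_right)
  also have "\<dots> = p" using pq q by simp
  finally have "p = Polynomial.smult (lead_coeff p) (\<Prod>a\<leftarrow>r#as. [:-a,1:])" using \<open>lead_coeff p = lead_coeff q\<close> by simp
  thus ?case by blast
qed

lemma jordan_matrix_entries:
  assumes "i < sum_list (map fst n_as)" "k < sum_list (map fst n_as)"
  shows "(k \<noteq> i \<and> k \<noteq> Suc i \<longrightarrow> jordan_matrix n_as $$ (i,k) = 0)
       \<and> (k = i \<longrightarrow> jordan_matrix n_as $$ (i,k) \<in> snd ` set n_as)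
       \<and> (k = Suc i \<longrightarrow> jordan_matrix n_as $$ (i,k) \<in> {0,1} \<and>
             ((\<forall>na\<in>set n_as. fst na = 1) \<longrightarrow> jordan_matrix n_as $$ (i,k) = 0))"
  using assms
proof (induction n_as arbitrary: i k)
  case Nil thus ?case by simp
next
  case (Cons na n_as)
  obtain m a where na: "na = (m,a)" by force
  let ?N = "sum_list (map fst n_as)"
  have JM: "jordan_matrix (na # n_as) = four_block_mat (jordan_block m a) (0\<^sub>m m ?N) (0\<^sub>m ?N m) (jordan_matrix n_as)"
    unfolding na by (rule jordan_matrix_Cons)
  have ik: "i < m + ?N" "k < m + ?N" using Cons.prems na by auto
  have e: "jordan_matrix (na # n_as) $$ (i,k) =
    (if i < m then if k < m then jordan_block m a $$ (i,k) else 0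
     else if k < m then 0 else jordan_matrix n_as $$ (i - m, k - m))"
    unfolding JM using ik by simp
  show ?case
  proof (cases "i < m")
    case True
    show ?thesis
    proof (cases "k < m")
      case True
      thus ?thesis using \<open>i < m\<close> e na by auto
    next
      case False thus ?thesis using \<open>i < m\<close> e by auto
    qed
  next
    case False
    show ?thesis
    proof (cases "k < m")
      case True thus ?thesis using \<open>\<not> i < m\<close> e by auto
    next
      case kF: False
      have IH: "?N > i - m" "?N > k - m" using ik False kF by auto
      note ih = Cons.IH[OF IH]
      have eq: "jordan_matrix (na # n_as) $$ (i,k) = jordan_matrix n_as $$ (i - m, k - m)"
        using e False kF by simp
      have "k = i \<longleftrightarrow> k - m = i - m" "k = Suc i \<longleftrightarrow> k - m = Suc (i - m)" using False kF by auto
      thus ?thesis unfolding eq using ih by auto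
    qed
  qed
qed


lemma char_poly_complex:
  fixes A :: "real mat" assumes A: "A \<in> carrier_mat n n"
  shows "char_poly (map_mat complex_of_real A) = map_poly complex_of_real (char_poly A)"
  by (rule of_real_hom.char_poly_hom[OF A])

lemma eig_complex_iff:
  fixes A :: "real mat" assumes A: "A \<in> carrier_mat n n"
  shows "eigenvalue (map_mat complex_of_real A) z \<longleftrightarrow> poly (map_poly complex_of_real (char_poly A)) z = 0"
proof -
  have "map_mat complex_of_real A \<in> carrier_mat n n" using A by simp
  from eigenvalue_root_char_poly[OF this] show ?thesis unfolding char_poly_complex[OF A] .
qed

lemma jordan_real:
  fixes A :: "real mat" assumes A: "A \<in> carrier_mat n n"
    and H: "\<And>e. eigenvalue (map_mat complex_of_real A) e \<Longrightarrow> e \<in> \<real>"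
  shows "\<exists>n_as. jordan_nf A n_as"
proof -
  have "\<exists>as. char_poly A = Polynomial.smult (lead_coeff (char_poly A)) (\<Prod>a\<leftarrow>as. [:-a,1:])"
    by (rule real_split, rule H, unfold eig_complex_iff[OF A])
  moreover have "lead_coeff (char_poly A) = 1" using degree_monic_char_poly[OF A] by simp
  ultimately obtain as where "char_poly A = (\<Prod>a\<leftarrow>as. [:-a,1:])" by auto
  from jordan_nf_exists[OF A this] show ?thesis .
qed

lemma jordan_block_eig:
  fixes A :: "real mat" assumes A: "A \<in> carrier_mat n n"
    and jnf: "jordan_nf A n_as" and mem: "(m,a) \<in> set n_as"
  shows "eigenvalue (map_mat complex_of_real A) (complex_of_real a)"
    "m \<le> order (complex_of_real a) (map_poly complex_of_real (char_poly A))"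
    "1 \<le> m"
proof -
  let ?p = "char_poly A"
  let ?q = "map_poly complex_of_real ?p"
  have m1: "m \<noteq> 0" using jnf mem unfolding jordan_nf_def by force
  thus "1 \<le> m" by simp
  have mo: "m \<le> order a ?p" by (rule jordan_nf_block_size_order_bound[OF jnf mem])
  have p0: "?p \<noteq> 0" using degree_monic_char_poly[OF A] by auto
  hence q0: "?q \<noteq> 0" by simp
  have "[:-a,1:] ^ order a ?p dvd ?p" by (rule order_1)
  hence "map_poly complex_of_real ([:-a,1:] ^ order a ?p) dvd ?q" by (rule of_real_poly_hom.hom_dvd)
  hence "[:-complex_of_real a,1:] ^ order a ?p dvd ?q" by (simp add: of_real_poly_hom.hom_power)
  hence "order a ?p \<le> order (complex_of_real a) ?q" by (rule order_max[OF _ q0])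
  thus mq: "m \<le> order (complex_of_real a) ?q" using mo by simp
  hence "order (complex_of_real a) ?q \<noteq> 0" using m1 by simp
  hence "poly ?q (complex_of_real a) = 0" using order_root by blast
  thus "eigenvalue (map_mat complex_of_real A) (complex_of_real a)" unfolding eig_complex_iff[OF A] .
qed


lemma prod_pos_sub: fixes d :: "nat \<Rightarrow> real"
  assumes "\<And>i. i < n \<Longrightarrow> d i > 0" "S \<subseteq> {0..<n}" shows "prod d S > 0"
  using assms by (intro prod_pos) auto

lemma top_subset:
  fixes d :: "nat \<Rightarrow> real"
  assumes pos: "\<And>i. i < n \<Longrightarrow> d i > 0"
    and dist: "\<And>i k. i < n \<Longrightarrow> k < n \<Longrightarrow> i \<noteq> k \<Longrightarrow> d i \<noteq> d k"
    and jn: "j \<le> n"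
  shows "\<exists>S0\<in>jsubsets n j. \<forall>S\<in>jsubsets n j. S \<noteq> S0 \<longrightarrow> prod d S < prod d S0"
proof -
  let ?js = "jsubsets n j"
  have fin: "finite (prod d ` ?js)" using js_finite by blast
  have "{0..<j} \<in> ?js" using jn unfolding jsubsets_def by auto
  hence ne: "prod d ` ?js \<noteq> {}" by blast
  from Max_in[OF fin ne] obtain S0 where S0: "S0 \<in> ?js" and S0M: "prod d S0 = Max (prod d ` ?js)" by auto
  have max: "prod d S \<le> prod d S0" if "S \<in> ?js" for S
    unfolding S0M using Max_ge[OF fin] that by blast
  have S0n: "S0 \<subseteq> {0..<n}" and cS0: "card S0 = j" and fS0: "finite S0"
    using jsubsets_card[OF S0] by auto
  have exch: "d b < d a" if a: "a \<in> S0" and b: "b < n" "b \<notin> S0" for a b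
  proof (rule ccontr)
    assume "\<not> d b < d a"
    moreover have "a \<noteq> b" using a b by auto
    moreover have "a < n" using a S0n by auto
    ultimately have "d a \<noteq> d b" "d a \<le> d b" using dist[of a b] b by auto
    hence lt: "d a < d b" by simp
    let ?S' = "insert b (S0 - {a})"
    have "card S0 > 0" using a fS0 card_gt_0_iff by blast
    hence j1: "j \<ge> 1" using cS0 by simp
    have c1: "card (S0 - {a}) = j - 1" using card_Diff_singleton[OF a] cS0 by simp
    have "b \<notin> S0 - {a}" using b by simp
    hence "card ?S' = Suc (card (S0 - {a}))" using fS0 by (simp add: card_insert_disjoint)
    hence "card ?S' = j" using c1 j1 by simp
    moreover have "?S' \<subseteq> {0..<n}" using S0n b by auto
    ultimately have S': "?S' \<in> ?js" unfolding jsubsets_def by simp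
    have "S0 - {a} \<subseteq> {0..<n}" using S0n by auto
    hence pr: "prod d (S0 - {a}) > 0" using pos by (intro prod_pos) auto
    have e1: "prod d ?S' = d b * prod d (S0 - {a})" using fS0 \<open>b \<notin> S0 - {a}\<close> by (simp add: prod.insert)
    have e2: "prod d S0 = d a * prod d (S0 - {a})" using prod.remove[OF fS0 a] .
    have "d a * prod d (S0 - {a}) < d b * prod d (S0 - {a})" by (rule mult_strict_right_mono[OF lt pr])
    hence "prod d S0 < prod d ?S'" unfolding e1 e2 .
    with max[OF S'] show False by simp
  qed
  have "\<forall>S\<in>?js. S \<noteq> S0 \<longrightarrow> prod d S < prod d S0"
  proof (intro ballI impI)
    fix S assume S: "S \<in> ?js" and ne: "S \<noteq> S0"
    have Sn: "S \<subseteq> {0..<n}" and cS: "card S = j" and fS: "finite S" using jsubsets_card[OF S] by auto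
    let ?A = "S0 - S" and ?B = "S - S0" and ?C = "S0 \<inter> S"
    have S0C: "S0 = ?C \<union> ?A" and SC: "S = ?C \<union> ?B" by auto
    have c1: "card S0 = card ?C + card ?A" using fS0 by (subst S0C, subst card_Un_disjoint) auto
    have c2: "card S = card ?C + card ?B" using fS by (subst SC, subst card_Un_disjoint) (auto simp: Int_commute)
    have cAB: "card ?B = card ?A" using c1 c2 cS cS0 by simp
    have Bne: "?B \<noteq> {}"
    proof
      assume "?B = {}"
      hence "S \<subseteq> S0" by auto
      hence "S = S0" using card_subset_eq[OF fS0 \<open>S \<subseteq> S0\<close>] cS cS0 by simp
      with ne show False by simp
    qed
    from finite_same_card_bij[OF _ _ cAB] fS fS0 obtain h where h: "bij_betw h ?B ?A" by auto
    have PB: "prod d ?B < prod (\<lambda>b. d (h b)) ?B"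
    proof -
      obtain b where b: "b \<in> ?B" using Bne by blast
      have hb: "\<And>b. b \<in> ?B \<Longrightarrow> h b \<in> ?A" using h unfolding bij_betw_def by auto
      have lt: "\<And>b. b \<in> ?B \<Longrightarrow> d b < d (h b)"
      proof -
        fix b assume b: "b \<in> ?B"
        show "d b < d (h b)" by (rule exch, insert hb[OF b] b Sn, auto)
      qed
      show ?thesis
      proof (rule prod_mono_strict[where f = d and g = "\<lambda>b. d (h b)", OF b lt[OF b]])
        show "finite ?B" using fS by simp
        fix i assume i: "i \<in> ?B"
        have "i < n" using i Sn by auto
        thus "0 \<le> d i \<and> d i \<le> d (h i)" using lt[OF i] pos[of i] by simp
        have "h i < n" using hb[OF i] S0n by auto
        thus "0 < d (h i)" using pos by simp
      qed
    qed
    also have "prod (\<lambda>b. d (h b)) ?B = prod d ?A" by (rule prod.reindex_bij_betw[OF h])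
    finally have AB: "prod d ?B < prod d ?A" .
    have Cpos: "prod d ?C > 0" using pos S0n by (intro prod_pos) auto
    have "prod d S = prod d ?C * prod d ?B" using fS by (subst SC, subst prod.union_disjoint) auto
    also have "\<dots> < prod d ?C * prod d ?A" using AB Cpos by simp
    also have "\<dots> = prod d S0" using fS0 by (subst (2) S0C, subst prod.union_disjoint) auto
    finally show "prod d S < prod d S0" .
  qed
  with S0 show ?thesis by blast
qed

lemma order_map_ge:
  fixes p :: "real poly"
  assumes p0: "p \<noteq> 0" and dv: "[:-a,1:] ^ k dvd p"
  shows "k \<le> order (complex_of_real a) (map_poly complex_of_real p)"
proof -
  have q0: "map_poly complex_of_real p \<noteq> 0" using p0 by simp
  have "map_poly complex_of_real ([:-a,1:] ^ k) dvd map_poly complex_of_real p" using dv by (rule of_real_poly_hom.hom_dvd)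
  hence "[:-complex_of_real a,1:] ^ k dvd map_poly complex_of_real p" by (simp add: of_real_poly_hom.hom_power)
  thus ?thesis by (rule order_max[OF _ q0])
qed

lemma jordan_setup:
  fixes A :: "real mat"
  assumes A: "A \<in> carrier_mat n n" and jnf: "jordan_nf A n_as"
  obtains P Q where "P \<in> carrier_mat n n" "Q \<in> carrier_mat n n" "jordan_matrix n_as \<in> carrier_mat n n"
    "P * Q = 1\<^sub>m n" "Q * P = 1\<^sub>m n" "A = P * jordan_matrix n_as * Q"
proof -
  from jnf have "similar_mat A (jordan_matrix n_as)" unfolding jordan_nf_def by simp
  from similar_matD[OF this] obtain m P Q where
    c: "{A, jordan_matrix n_as, P, Q} \<subseteq> carrier_mat m m" and PQ: "P * Q = 1\<^sub>m m" "Q * P = 1\<^sub>m m"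
    and AJ: "A = P * jordan_matrix n_as * Q" by blast
  have "m = n" using c A by auto
  thus ?thesis using that c PQ AJ by auto
qed

lemma prod_two_dvd:
  fixes f :: "nat \<Rightarrow> 'a :: comm_semiring_1"
  assumes fin: "finite I" and i: "i \<in> I" and k: "k \<in> I" and ik: "i \<noteq> k" and fi: "f i = p" and fk: "f k = p"
  shows "p ^ 2 dvd prod f I"
proof -
  have "prod f I = f i * prod f (I - {i})" by (rule prod.remove[OF fin i])
  also have "prod f (I - {i}) = f k * prod f (I - {i} - {k})" by (rule prod.remove, insert fin k ik, auto)
  finally have "prod f I = p ^ 2 * prod f (I - {i} - {k})" using fi fk by (simp add: power2_eq_square ac_simps)
  thus ?thesis by simp
qed

lemma part1:
  fixes A :: "real mat"
  assumes A: "A \<in> carrier_mat n n"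
    and H: "\<forall>e. eigenvalue (map_mat complex_of_real A) e \<longrightarrow> e \<in> \<real> \<and> Re e \<ge> 0"
  shows "\<exists>K. TP_structure n K \<and> GTP A K"
proof -
  obtain n_as where jnf: "jordan_nf A n_as" using jordan_real[OF A] H by blast
  let ?J = "jordan_matrix n_as"
  obtain P Q where P: "P \<in> carrier_mat n n" and Q: "Q \<in> carrier_mat n n" and J: "?J \<in> carrier_mat n n"
    and PQ: "P * Q = 1\<^sub>m n" and QP: "Q * P = 1\<^sub>m n" and AJ: "A = P * ?J * Q"
    by (rule jordan_setup[OF A jnf])
  have dimJ: "sum_list (map fst n_as) = n" using J unfolding carrier_mat_def by simp
  have apos: "a \<ge> 0" if "a \<in> snd ` set n_as" for a
  proof -
    from that obtain m where "(m,a) \<in> set n_as" by force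
    from jordan_block_eig(1)[OF A jnf this] H have "Re (complex_of_real a) \<ge> 0" by blast
    thus ?thesis by simp
  qed
  have bid: "k = i \<or> k = Suc i" if "i < n" "k < n" "?J $$ (i,k) \<noteq> 0" for i k
    using jordan_matrix_entries[of i n_as k] that dimJ by auto
  have nn: "?J $$ (i,k) \<ge> 0" if "i < n" "k < n" for i k
    using jordan_matrix_entries[of i n_as k] that dimJ apos by (cases "k = i"; cases "k = Suc i") auto
  have Jnn: "det (submatrix ?J S T) \<ge> 0" if S: "S \<in> jsubsets n j" and T: "T \<in> jsubsets n j" for S T j
  proof -
    have "det (submatrix ?J S T) = (\<Prod>i\<in>{0..<j}. ?J $$ (pick S i, pick T i))"
      by (rule bidiag_minor[OF J S T bid])
    also have "\<dots> \<ge> 0" using nn pick_js(2)[OF S] pick_js(2)[OF T] by (intro prod_nonneg) auto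
    finally show ?thesis .
  qed
  define K where "K = (\<lambda>j. {y \<in> ext_space n j. ext_pow j Q y \<in> {x. \<forall>S\<in>jsubsets n j. 0 \<le> x S}})"
  have "TP_structure n K \<and> GTP A K"
    unfolding TP_structure_def GTP_def K_def AJ using gtp_cone[OF P Q J PQ QP Jnn] P by simp
  thus ?thesis by blast
qed

lemma part2:
  fixes A :: "real mat"
  assumes A: "A \<in> carrier_mat n n"
    and H: "\<forall>e. eigenvalue (map_mat complex_of_real A) e \<longrightarrow>
               e \<in> \<real> \<and> Re e > 0 \<and> order e (char_poly (map_mat complex_of_real A)) = 1"
  shows "\<exists>K. TP_structure n K \<and> GSTP A K"
proof -
  obtain n_as where jnf: "jordan_nf A n_as" using jordan_real[OF A] H by blast
  let ?J = "jordan_matrix n_as"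
  obtain P Q where P: "P \<in> carrier_mat n n" and Q: "Q \<in> carrier_mat n n" and J: "?J \<in> carrier_mat n n"
    and PQ: "P * Q = 1\<^sub>m n" and QP: "Q * P = 1\<^sub>m n" and AJ: "A = P * ?J * Q"
    by (rule jordan_setup[OF A jnf])
  have dimJ: "sum_list (map fst n_as) = n" using J unfolding carrier_mat_def by simp
  let ?p = "char_poly A"
  have p0: "?p \<noteq> 0" using degree_monic_char_poly[OF A] by auto
  have cpc: "char_poly (map_mat complex_of_real A) = map_poly complex_of_real ?p" by (rule char_poly_complex[OF A])
  have apos: "a > 0" if "a \<in> snd ` set n_as" for a
  proof -
    from that obtain m where "(m,a) \<in> set n_as" by force
    from jordan_block_eig(1)[OF A jnf this] H have "Re (complex_of_real a) > 0" by blast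
    thus ?thesis by simp
  qed
  have ord1: "order (complex_of_real a) (map_poly complex_of_real ?p) = 1" if "(m,a) \<in> set n_as" for m a
    using jordan_block_eig(1)[OF A jnf that] H cpc by metis
  have sz1: "\<forall>na\<in>set n_as. fst na = 1"
  proof
    fix na assume na: "na \<in> set n_as"
    obtain m a where nma: "na = (m,a)" by force
    have "m \<le> 1" using jordan_block_eig(2)[OF A jnf na[unfolded nma]] ord1[OF na[unfolded nma]] by simp
    moreover have "1 \<le> m" using jordan_block_eig(3)[OF A jnf na[unfolded nma]] .
    ultimately show "fst na = 1" using nma by simp
  qed
  have dg: "?J $$ (i,k) = 0" if "i < n" "k < n" "i \<noteq> k" for i k
    using jordan_matrix_entries[of i n_as k] that dimJ sz1 by (cases "k = Suc i") auto
  define d where "d = (\<lambda>i. ?J $$ (i,i))"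
  have dpos: "d i > 0" if "i < n" for i
    using jordan_matrix_entries[of i n_as i] that dimJ apos unfolding d_def by auto
  have ut: "upper_triangular ?J" unfolding upper_triangular_def
    using jordan_matrix_upper_triangular[of _ n_as] by simp
  have cpJ: "?p = (\<Prod>i\<in>{0..<n}. [:- d i, 1:])"
  proof -
    have "?p = char_poly ?J" by (rule char_poly_similar, insert jnf, simp add: jordan_nf_def)
    also have "\<dots> = (\<Prod>a\<leftarrow>diag_mat ?J. [:- a, 1:])" by (rule char_poly_upper_triangular[OF J ut])
    also have "\<dots> = (\<Prod>i\<in>{0..<n}. [:- d i, 1:])"
      unfolding diag_mat_def d_def using dimJ by (simp add: prod.distinct_set_conv_list[symmetric] o_def)
    finally show ?thesis .
  qed
  have ddist: "d i \<noteq> d k" if "i < n" "k < n" "i \<noteq> k" for i k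
  proof
    assume eq: "d i = d k"
    have "[:- d i, 1:] ^ 2 dvd ?p" unfolding cpJ
      by (rule prod_two_dvd[where i = i and k = k], insert that eq, auto)
    hence "2 \<le> order (complex_of_real (d i)) (map_poly complex_of_real ?p)" by (rule order_map_ge[OF p0])
    moreover have "d i \<in> snd ` set n_as"
      using jordan_matrix_entries[of i n_as i] that dimJ unfolding d_def by auto
    then obtain m where "(m, d i) \<in> set n_as" by force
    from ord1[OF this] have "order (complex_of_real (d i)) (map_poly complex_of_real ?p) = 1" .
    ultimately show False by simp
  qed
  have Dm: "det (submatrix ?J S T) = (if S = T then prod d S else 0)"
    if S: "S \<in> jsubsets n j" and T: "T \<in> jsubsets n j" for S T j
    using diag_minor[OF J S T dg] unfolding d_def by simp
  have "\<forall>j\<in>{1..n}. \<exists>S0\<in>jsubsets n j. \<forall>S\<in>jsubsets n j. S \<noteq> S0 \<longrightarrow> prod d S < prod d S0"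
    using top_subset[OF dpos ddist] by auto
  then obtain S0 where S0: "\<And>j. j \<in> {1..n} \<Longrightarrow> S0 j \<in> jsubsets n j"
    and S0max: "\<And>j S. j \<in> {1..n} \<Longrightarrow> S \<in> jsubsets n j \<Longrightarrow> S \<noteq> S0 j \<Longrightarrow> prod d S < prod d (S0 j)"
    by metis
  have mupos: "prod d S > 0" if "S \<in> jsubsets n j" for S j
    using dpos jsubsets_card(4)[OF that] by (intro prod_pos) auto
  define K where "K = (\<lambda>j. {y \<in> ext_space n j. ext_pow j Q y \<in>
       {x. (\<Sum>S\<in>jsubsets n j - {S0 j}. \<bar>x S\<bar>) \<le> x (S0 j)}})"
  have "\<forall>j\<in>{1..n}. proper_cone_in (ext_space n j) (K j) \<and> K_pos (ext_space n j) (ext_pow j A) (K j)"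
  proof
    fix j assume j: "j \<in> {1..n}"
    show "proper_cone_in (ext_space n j) (K j) \<and> K_pos (ext_space n j) (ext_pow j A) (K j)"
      unfolding K_def AJ
      by (rule gstp_cone[OF P Q J PQ QP S0[OF j] Dm mupos S0max[OF j]])
  qed
  hence "TP_structure n K \<and> GSTP A K"
    unfolding TP_structure_def GSTP_def using A by simp
  thus ?thesis by blast
qed

theorem proposition19:
  fixes A :: "real mat" and n :: nat
  assumes "A \<in> carrier_mat n n"
  shows "((\<forall>e. eigenvalue (map_mat complex_of_real A) e \<longrightarrow> e \<in> \<real> \<and> Re e \<ge> 0)
            \<longrightarrow> (\<exists>K. TP_structure n K \<and> GTP A K))
       \<and> ((\<forall>e. eigenvalue (map_mat complex_of_real A) e \<longrightarrow>
               e \<in> \<real> \<and> Re e > 0 \<and> order e (char_poly (map_mat complex_of_real A)) = 1)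
            \<longrightarrow> (\<exists>K. TP_structure n K \<and> GSTP A K))"
  using part1[OF assms] part2[OF assms] by blast

end
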